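(* Let $K\in\mathcal{K}$ and let $L_0\in\mathbb{R}^{q\times n}$ be such that $A_K+DL_0$ is Hurwitz. Define recursively, for $j=0,1,2,\dots$, $P^{j}$ as the solution of $$(A_K+DL_j)^\top P^{j}+P^{j}(A_K+DL_j)+Q_K-\gamma^2L_j^\top L_j=0,$$ and $L_{j+1}=\gamma^{-2}D^\top P^{j}$. Then there exists $\beta(K)\in[0,1)$ such that $\mathrm{Tr}(P_K-P^{j+1})\le\beta(K)\,\mathrm{Tr}(P_K-P^{j})$ for all $j\in\mathbb{N}_+$.
   Context: Let $A\in\mathbb{R}^{n\times n}$, $B\in\mathbb{R}^{n\times m}$, $C\in\mathbb{R}^{p\times n}$, $D\in\mathbb{R}^{n\times q}$, $E\in\mathbb{R}^{p\times m}$, $\gamma>0$, with $Q:=C^\top C\succ 0$, $E^\top C=0$, $R:=E^\top E\succ 0$. For $K\in\mathbb{R}^{m\times n}$ set $A_K=A-BK$, $Q_K=Q+K^\top RK$, $T_{zw}(K)(s)=(C-EK)(sI-A+BK)^{-1}D$, and $\mathcal{K}=\{K:\ A_K\text{ Hurwitz},\ \|T_{zw}(K)\|_{\mathcal{H}_\infty}<\gamma\}$, where $\|G\|_{\mathcal{H}_\infty}=\sup_{\omega\in\mathbb{R}}\bar\sigma(G(j\omega))$. For $K\in\mathcal{K}$, $P_K$ denotes the unique symmetric positive definite solution of $A_K^\top P+PA_K+Q_K+\gamma^{-2}PDD^\top P=0$ for which $A_K+\gamma^{-2}DD^\top P_K$ is Hurwitz. $\mathrm{Tr}$ is the trace. 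*)

theory Defs
  imports "HOL-Analysis.Analysis"
begin

text \<open>Real matrices are typed as real^'c^'r (r rows, c columns); dimensions are finite index types.\<close>

definition cmat :: "real^'c^'r \<Rightarrow> complex^'c^'r" where
  "cmat M = (\<chi> i j. complex_of_real (M $ i $ j))"

definition hurwitz :: "real^'n^'n \<Rightarrow> bool" where
  "hurwitz M \<longleftrightarrow> (\<forall>(lam::complex) (v::complex^'n). v \<noteq> 0 \<and> cmat M *v v = lam *s v \<longrightarrow> Re lam < 0)"

definition pos_def :: "real^'n^'n \<Rightarrow> bool" where
  "pos_def M \<longleftrightarrow> (\<forall>x. x \<noteq> 0 \<longrightarrow> x \<bullet> (M *v x) > 0)"

text \<open>Largest singular value = induced Euclidean operator norm.\<close>
definition max_sv :: "complex^'c^'r \<Rightarrow> real" where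
  "max_sv G = onorm (\<lambda>v. G *v v)"

definition Hinf_norm :: "(real \<Rightarrow> complex^'c^'r) \<Rightarrow> real" where
  "Hinf_norm G = (SUP w. max_sv (G w))"

definition Tzw :: "real^'n^'n \<Rightarrow> real^'m^'n \<Rightarrow> real^'n^'p \<Rightarrow> real^'q^'n \<Rightarrow> real^'m^'p
      \<Rightarrow> real^'n^'m \<Rightarrow> real \<Rightarrow> complex^'q^'p" where
  "Tzw A B C D E K w = cmat (C - E ** K) **
      matrix_inv (mat (\<i> * complex_of_real w) - cmat (A - B ** K)) ** cmat D"

definition Kset :: "real^'n^'n \<Rightarrow> real^'m^'n \<Rightarrow> real^'n^'p \<Rightarrow> real^'q^'n \<Rightarrow> real^'m^'p
      \<Rightarrow> real \<Rightarrow> (real^'n^'m) set" where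
  "Kset A B C D E \<gamma> = {K. hurwitz (A - B ** K) \<and> Hinf_norm (Tzw A B C D E K) < \<gamma>}"

end

theory Submission
  imports Defs "Jordan_Normal_Form.Missing_Misc" "HOL-Computational_Algebra.Fundamental_Theorem_Algebra"
begin


lemma matrix_add_rdistrib': "((B + C) ** A) = (B ** A) + (C ** A)"
  by (simp add: matrix_matrix_mult_def vec_eq_iff distrib_right sum.distrib)
lemma matrix_diff_rdistrib': "((B - C) ** (A::'a::ring_1^_^_)) = (B ** A) - (C ** A)"
  by (simp add: matrix_matrix_mult_def vec_eq_iff left_diff_distrib sum_subtractf)
lemma matrix_diff_ldistrib': "((A::'a::ring_1^_^_) ** (B - C)) = (A ** B) - (A ** C)"
  by (simp add: matrix_matrix_mult_def vec_eq_iff right_diff_distrib sum_subtractf)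
lemma matrix_neg_left: "((- B) ** (A::'a::ring_1^_^_)) = - (B ** A)"
  by (simp add: matrix_matrix_mult_def vec_eq_iff sum_negf)
lemma matrix_neg_right: "((A::'a::ring_1^_^_) ** (- B)) = - (A ** B)"
  by (simp add: matrix_matrix_mult_def vec_eq_iff sum_negf)

lemma mat_add: "mat (a + b) = (mat a + mat b :: 'a::monoid_add^'n^'n)"
  by (simp add: mat_def vec_eq_iff)
lemma mat_diff: "mat (a - b) = (mat a - mat b :: 'a::group_add^'n^'n)"
  by (simp add: mat_def vec_eq_iff)
lemma if_times_zero: "(if P then a else 0) * b = (if P then a * b else (0::'a::semiring_0))" by simp
lemma times_if_zero: "b * (if P then a else 0) = (if P then b * a else (0::'a::semiring_0))" by simp

lemma mat_mul_left_entry: "(mat c ** (A::'a::semiring_1^'m^'n)) $ i $ j = c * A $ i $ j"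
  unfolding matrix_matrix_mult_def mat_def by (simp add: if_times_zero)
lemma mat_mul_right_entry: "((A::'a::semiring_1^'m^'n) ** mat c) $ i $ j = A $ i $ j * c"
  unfolding matrix_matrix_mult_def mat_def by (simp add: times_if_zero)
lemma mat_mult: "mat (a * b) = (mat a ** mat b :: 'a::semiring_1^'n^'n)"
  by (simp add: vec_eq_iff mat_mul_left_entry) (simp add: mat_def)
lemma mat_comm: "mat (c::'a::comm_semiring_1) ** (A::'a^'n^'n) = A ** mat c"
  by (simp add: vec_eq_iff mat_mul_left_entry mat_mul_right_entry mult.commute)
lemma mat_neg: "mat (- a) = (- mat a :: 'a::group_add^'n^'n)"
  by (simp add: mat_def vec_eq_iff)
lemma mat_swap: "mat (c::'a::comm_semiring_1) ** ((N::'a^'n^'n) ** X) = N ** (mat c ** X)"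
proof -
  have "mat c ** (N ** X) = (mat c ** N) ** X" by (rule matrix_mul_assoc)
  also have "\<dots> = (N ** mat c) ** X" by (simp only: mat_comm[of c N])
  also have "\<dots> = N ** (mat c ** X)" by (rule matrix_mul_assoc[symmetric])
  finally show ?thesis .
qed

lemma matrix_mul_sum_right: "finite S \<Longrightarrow> (A::'a::semiring_1^_^_) ** sum f S = (\<Sum>k\<in>S. A ** f k)"
  by (induction S rule: finite_induct) (auto simp: matrix_add_ldistrib)

definition mp :: "complex^'n^'n \<Rightarrow> nat \<Rightarrow> complex^'n^'n" where
  "mp N k = (((**) N) ^^ k) (mat 1)"

lemma mp_0[simp]: "mp N 0 = mat 1" by (simp add: mp_def)
lemma mp_Suc[simp]: "mp N (Suc k) = N ** mp N k" by (simp add: mp_def)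

definition meval :: "complex poly \<Rightarrow> complex^'n^'n \<Rightarrow> complex^'n^'n" where
  "meval p N = (\<Sum>k<Suc (degree p). mat (coeff p k) ** mp N k)"

lemma meval_upto: assumes "degree p < n" shows "meval p N = (\<Sum>k<n. mat (coeff p k) ** mp N k)"
  unfolding meval_def
proof (rule sum.mono_neutral_left)
  show "\<forall>i\<in>{..<n} - {..<Suc (degree p)}. mat (coeff p i) ** mp N i = 0"
    by (auto simp: coeff_eq_0)
qed (use assms in auto)

lemma meval_add: fixes p q :: "complex poly" shows "meval (p + q) N = meval p N + meval q N"
proof -
  define n where "n = Suc (max (degree p) (degree q))"
  have "degree (p+q) < n" using degree_add_le_max[of p q] unfolding n_def by linarith
  then have "meval (p + q) N = (\<Sum>k<n. mat (coeff (p+q) k) ** mp N k)" by (rule meval_upto)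
  also have "\<dots> = (\<Sum>k<n. mat (coeff p k) ** mp N k) + (\<Sum>k<n. mat (coeff q k) ** mp N k)"
    by (simp add: mat_add matrix_add_rdistrib' sum.distrib)
  also have "\<dots> = meval p N + meval q N"
    by (subst (1 2) meval_upto[of _ n]) (auto simp: n_def)
  finally show ?thesis .
qed

lemma meval_0[simp]: "meval 0 N = 0" by (simp add: meval_def)

lemma meval_smult: "meval (smult c p) N = mat c ** meval p N"
proof -
  have "meval (smult c p) N = (\<Sum>k<Suc (degree p). mat (coeff (smult c p) k) ** mp N k)"
    using degree_smult_le[of c p] by (intro meval_upto) auto
  also have "\<dots> = mat c ** meval p N"
    unfolding meval_def matrix_mul_sum_right[OF finite_lessThan] by (simp only: coeff_smult mat_mult matrix_mul_assoc)
  finally show ?thesis .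
qed

lemma meval_pCons: "meval (pCons a p) N = mat a + N ** meval p N"
proof -
  define n where "n = Suc (degree p)"
  have "degree (pCons a p) < Suc n" unfolding n_def
    by (metis Suc_le_eq degree_pCons_le le_imp_less_Suc) 
  then have "meval (pCons a p) N = (\<Sum>k<Suc n. mat (coeff (pCons a p) k) ** mp N k)"
    by (rule meval_upto)
  also have "\<dots> = mat a + (\<Sum>k<n. mat (coeff p k) ** (N ** mp N k))"
    by (subst sum.lessThan_Suc_shift) simp
  also have "\<dots> = mat a + N ** meval p N"
    unfolding meval_def n_def matrix_mul_sum_right[OF finite_lessThan] by (simp only: mat_swap)
  finally show ?thesis .
qed

lemma meval_mult: "meval (p * q) N = meval p N ** meval q N"
proof (induction p)
  case 0
  then show ?case by simp
next
  case (pCons a p)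
  have "meval (pCons a p * q) N = meval (smult a q + pCons 0 (p * q)) N" by simp
  also have "\<dots> = mat a ** meval q N + N ** (meval p N ** meval q N)"
    by (simp add: meval_add meval_smult meval_pCons pCons.IH)
  also have "\<dots> = meval (pCons a p) N ** meval q N"
    by (simp add: meval_pCons matrix_add_rdistrib' matrix_mul_assoc)
  finally show ?case .
qed

lemma meval_lin: "meval [:-a, 1:] N = N - mat a"
  by (simp add: meval_pCons mat_neg)

definition pl :: "complex^'n^'n \<Rightarrow> complex list \<Rightarrow> complex^'n^'n" where
  "pl N as = foldr (\<lambda>a P. (N - mat a) ** P) as (mat 1)"

lemma meval_prod_list: "meval (prod_list (map (\<lambda>a. [:-a, 1:]) as)) N = pl N as"
proof (induction as)
  case Nil
  have "meval (pCons 1 0) N = mat 1" by (simp only: meval_pCons meval_0 times0_right) simp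
  then show ?case by (simp add: pl_def one_pCons)
next
  case (Cons a as)
  have "meval (prod_list (map (\<lambda>a. [:-a, 1:]) (a # as))) N
     = meval ([:-a, 1:] * prod_list (map (\<lambda>a. [:-a, 1:]) as)) N" by simp
  also have "\<dots> = (N - mat a) ** pl N as" by (simp only: meval_mult meval_lin Cons.IH)
  finally show ?case by (simp add: pl_def)
qed


lemma meval_sum: "finite A \<Longrightarrow> meval (sum g A) N = (\<Sum>x\<in>A. meval (g x) N)"
  by (induction A rule: finite_induct) (simp_all add: meval_add)

lemma meval_monom: "meval (monom c k) N = mat c ** mp N k"
proof -
  have "meval (monom c k) N = (\<Sum>j<Suc k. mat (coeff (monom c k) j) ** mp N j)"
    by (rule meval_upto) (simp add: degree_monom_le le_imp_less_Suc)
  also have "\<dots> = (\<Sum>j<Suc k. if j = k then mat c ** mp N k else 0)"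
    by (rule sum.cong) (auto simp: coeff_monom)
  also have "\<dots> = mat c ** mp N k" by simp
  finally show ?thesis .
qed

lemma mat_neg1: "mat (-1) ** X = - (X::complex^'n^'n)"
  by (simp add: vec_eq_iff mat_mul_left_entry)

lemma meval_diff: "meval (p - q) N = meval p N - meval q N"
proof -
  have "p - q = p + smult (-1) q" by simp
  then show ?thesis by (simp only: meval_add meval_smult mat_neg1) simp
qed

lemma mat_of_real: "mat (complex_of_real r) ** X = r *\<^sub>R (X::complex^'n^'n)"
proof -
  have "(r *\<^sub>R X) $ i $ j = complex_of_real r * X $ i $ j" for i j
  proof -
    have "(r *\<^sub>R X) $ i $ j = r *\<^sub>R (X $ i $ j)" by simp
    also have "\<dots> = complex_of_real r * X $ i $ j" by (simp add: scaleR_conv_of_real)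
    finally show ?thesis .
  qed
  then show ?thesis by (simp add: vec_eq_iff mat_mul_left_entry)
qed

lemma annih_poly: "\<exists>p. p \<noteq> 0 \<and> meval p (N::complex^'n^'n) = 0"
proof -
  define m where "m = DIM(complex^'n^'n)"
  define f where "f k = mp N k" for k
  show ?thesis
  proof (cases "inj_on f {..m}")
    case False
    then obtain i j where ij: "i \<le> m" "j \<le> m" "i \<noteq> j" "f i = f j"
      unfolding inj_on_def by auto
    define p where "p = monom (1::complex) j - monom 1 i"
    have "coeff p j = 1" using ij by (simp add: p_def coeff_monom)
    then have "p \<noteq> 0" by auto
    moreover have "meval p N = 0"
      using ij by (simp add: p_def meval_diff meval_monom f_def)
    ultimately show ?thesis by blast
  next
    case True
    define S where "S = f ` {..m}"
    have cS: "card S = Suc m" using True by (simp add: S_def card_image)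
    have fS: "finite S" by (simp add: S_def)
    have "\<not> independent S"
      using independent_bound[of S] cS unfolding m_def by auto
    then obtain u where u: "\<exists>v\<in>S. u v \<noteq> 0" "(\<Sum>v\<in>S. u v *\<^sub>R v) = 0"
      using real_vector.dependent_finite[OF fS] by auto
    define p where "p = (\<Sum>k\<le>m. monom (complex_of_real (u (f k))) k)"
    have "meval p N = (\<Sum>k\<le>m. u (f k) *\<^sub>R f k)"
      by (simp add: p_def meval_sum meval_monom mat_of_real f_def)
    also have "\<dots> = (\<Sum>v\<in>S. u v *\<^sub>R v)"
      unfolding S_def by (subst sum.reindex[OF True]) simp
    also have "\<dots> = 0" by (rule u(2))
    finally have "meval p N = 0" .
    moreover obtain k0 where k0: "k0 \<le> m" "u (f k0) \<noteq> 0" using u(1) by (auto simp: S_def)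
    have "coeff p k0 = complex_of_real (u (f k0))"
      using k0 by (simp add: p_def coeff_sum coeff_monom)
    then have "p \<noteq> 0" using k0 by auto
    ultimately show ?thesis by blast
  qed
qed

lemma poly_factor_list: "\<exists>as. (p::complex poly) = smult (lead_coeff p) (prod_list (map (\<lambda>a. [:-a, 1:]) as))"
proof -
  obtain xs where xs: "mset xs = proots p" using ex_mset by blast
  have "(\<Prod>x\<in>#proots p. [:-x, 1:]) = prod_list (map (\<lambda>a. [:-a, 1:]) xs)"
    unfolding xs[symmetric] by (simp add: prod_mset_prod_list[symmetric])
  then show ?thesis using complex_poly_decompose_multiset[of p] by metis
qed

lemma annih_list: "\<exists>as. pl (N::complex^'n^'n) as = 0"
proof -
  obtain p where p: "p \<noteq> 0" "meval p N = 0" using annih_poly by blast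
  obtain as where as: "p = smult (lead_coeff p) (prod_list (map (\<lambda>a. [:-a, 1:]) as))"
    using poly_factor_list by blast
  have "mat (lead_coeff p) ** pl N as = 0"
    using p(2) as by (metis meval_smult meval_prod_list)
  then have "mat (inverse (lead_coeff p)) ** (mat (lead_coeff p) ** pl N as) = 0" by simp
  then have "pl N as = 0" using p(1)
    by (simp only: matrix_mul_assoc mat_mult[symmetric]) simp
  then show ?thesis by blast
qed

lemma comm_lin: "(N - mat a) ** (N - mat b) = (N - mat b) ** (N - mat (a::complex))"
proof -
  have 1: "mat a ** N = N ** mat a" by (rule mat_comm)
  have 2: "mat b ** N = N ** mat b" by (rule mat_comm)
  have 3: "mat a ** mat b = mat b ** (mat a :: complex^'n^'n)" by (simp only: mat_mult[symmetric] mult.commute)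
  show ?thesis by (simp only: matrix_diff_ldistrib' matrix_diff_rdistrib' 1 2 3) (simp add: algebra_simps)
qed

lemma pl_comm: "(N - mat a) ** pl N as = pl N as ** (N - mat a)"
proof (induction as)
  case Nil
  then show ?case by (simp add: pl_def)
next
  case (Cons b bs)
  have "(N - mat a) ** pl N (b # bs) = ((N - mat a) ** (N - mat b)) ** pl N bs"
    by (simp add: pl_def matrix_mul_assoc)
  also have "\<dots> = (N - mat b) ** ((N - mat a) ** pl N bs)"
    by (simp only: comm_lin[of N a b] matrix_mul_assoc)
  also have "\<dots> = ((N - mat b) ** pl N bs) ** (N - mat a)"
    by (simp only: Cons.IH matrix_mul_assoc)
  also have "\<dots> = pl N (b # bs) ** (N - mat a)" by (simp add: pl_def)
  finally show ?case .
qed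

lemma sylvester_zero:
  fixes N S Y :: "complex^'n^'n"
  assumes NY: "N ** Y = Y ** S"
    and ev: "\<And>a. \<not> invertible (N - mat a) \<Longrightarrow> invertible (S - mat a)"
  shows "Y = 0"
proof -
  obtain as where as: "pl N as = 0" using annih_list by blast
  have "pl N as ** Y = 0 \<Longrightarrow> Y = 0" for as
  proof (induction as)
    case Nil
    then show ?case by (simp add: pl_def)
  next
    case (Cons a as)
    define Z where "Z = pl N as ** Y"
    have 0: "(N - mat a) ** Z = 0" using Cons.prems by (simp add: Z_def pl_def matrix_mul_assoc)
    have "Z = 0"
    proof (cases "invertible (N - mat a)")
      case True
      then obtain B where B: "B ** (N - mat a) = mat 1" by (auto simp: invertible_left_inverse)
      have "Z = (B ** (N - mat a)) ** Z" by (simp add: B)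
      also have "\<dots> = 0" by (simp only: matrix_mul_assoc[symmetric] 0) simp
      finally show ?thesis .
    next
      case False
      then have "invertible (S - mat a)" by (rule ev)
      then obtain C where C: "(S - mat a) ** C = mat 1" by (auto simp: invertible_right_inverse)
      have NaY: "(N - mat a) ** Y = Y ** (S - mat a)"
        by (simp add: matrix_diff_ldistrib' matrix_diff_rdistrib' NY mat_comm)
      have "Z ** (S - mat a) = pl N as ** ((N - mat a) ** Y)"
        by (simp only: Z_def NaY matrix_mul_assoc)
      also have "\<dots> = (N - mat a) ** Z"
        by (simp only: Z_def matrix_mul_assoc pl_comm)
      finally have 1: "Z ** (S - mat a) = 0" using 0 by simp
      have "Z = Z ** ((S - mat a) ** C)" by (simp add: C)
      also have "\<dots> = 0" by (simp only: matrix_mul_assoc 1) simp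
      finally show ?thesis .
    qed
    then have "pl N as ** Y = 0" by (simp add: Z_def)
    then show ?case by (rule Cons.IH)
  qed
  note main = this
  have "pl N as ** Y = 0" using as by simp
  then show ?thesis by (rule main)
qed


section \<open>Complexification and Hurwitz\<close>

lemma cmat_entry[simp]: "cmat M $ i $ j = complex_of_real (M $ i $ j)"
  by (simp add: cmat_def)
lemma cmat_mult: "cmat (A ** B) = cmat A ** cmat B"
  by (simp add: vec_eq_iff matrix_matrix_mult_def)
lemma cmat_add: "cmat (A + B) = cmat A + cmat B"
  by (simp add: vec_eq_iff)
lemma cmat_diff: "cmat (A - B) = cmat A - cmat B"
  by (simp add: vec_eq_iff)
lemma cmat_neg: "cmat (- A) = - cmat A"
  by (simp add: vec_eq_iff)
lemma cmat_transpose: "cmat (transpose A) = transpose (cmat A)"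
  by (simp add: vec_eq_iff transpose_def)
lemma cmat_eq_0: "cmat A = 0 \<Longrightarrow> A = 0"
  by (simp add: vec_eq_iff)

lemma mat_mulv: "mat a *v x = a *s (x::'a::comm_semiring_1^'n)"
  by (simp add: vec_eq_iff matrix_vector_mult_def mat_def if_times_zero)

lemma noninv_ker:
  fixes A :: "'a::field^'n^'n"
  assumes "\<not> invertible A" shows "\<exists>x. x \<noteq> 0 \<and> A *v x = 0"
  using assms by (auto simp: invertible_left_inverse matrix_left_invertible_ker)

lemma invertible_transpose_gen:
  fixes A :: "'a::field^'n^'n"
  assumes "invertible A" shows "invertible (transpose A)"
proof -
  obtain B where "B ** A = mat 1" using assms by (auto simp: invertible_left_inverse)
  then have "transpose A ** transpose B = mat 1" by (metis matrix_transpose_mul transpose_mat)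
  then show ?thesis by (auto simp: invertible_right_inverse)
qed

lemma invertible_neg:
  fixes A :: "'a::field^'n^'n"
  assumes "invertible (- A)" shows "invertible A"
proof -
  obtain B where "B ** (- A) = mat 1" using assms by (auto simp: invertible_left_inverse)
  then have "(- B) ** A = mat 1" by (simp add: matrix_neg_left matrix_neg_right)
  then show ?thesis by (auto simp: invertible_left_inverse)
qed

lemma invertible_neg_iff:
  fixes A :: "'a::field^'n^'n"
  shows "invertible (- A) \<longleftrightarrow> invertible A"
  by (metis invertible_neg minus_minus)

lemma hurwitz_noninv:
  assumes "hurwitz M" "\<not> invertible (cmat M - mat a)"
  shows "Re a < 0"
proof -
  obtain x where x: "x \<noteq> 0" "(cmat M - mat a) *v x = 0" using noninv_ker assms(2) by blast
  then have "cmat M *v x = a *s x" by (simp add: matrix_vector_mult_diff_rdistrib mat_mulv)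
  then show ?thesis using assms(1) x(1) unfolding hurwitz_def by blast
qed

lemma lyap_inj:
  fixes M X :: "real^'n^'n"
  assumes H: "hurwitz M" and eq: "transpose M ** X + X ** M = 0"
  shows "X = 0"
proof -
  define N where "N = cmat (transpose M)"
  define S where "S = cmat (- M)"
  have "transpose M ** X = X ** (- M)" using eq by (simp add: matrix_neg_right eq_neg_iff_add_eq_0)
  then have NY: "N ** cmat X = cmat X ** S" unfolding N_def S_def by (metis cmat_mult)
  have "cmat X = 0"
  proof (rule sylvester_zero[OF NY])
    fix a
    assume ni: "\<not> invertible (N - mat a)"
    have "N - mat a = transpose (cmat M - mat a)"
      by (simp add: N_def cmat_transpose vec_eq_iff transpose_def mat_def)
    then have "\<not> invertible (cmat M - mat a)" using ni invertible_transpose_gen by metis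
    then have ra: "Re a < 0" using hurwitz_noninv[OF H] by blast
    show "invertible (S - mat a)"
    proof (rule ccontr)
      assume "\<not> invertible (S - mat a)"
      moreover have "S - mat a = - (cmat M - mat (- a))"
        by (simp add: S_def cmat_neg mat_neg)
      ultimately have "\<not> invertible (cmat M - mat (- a))" using invertible_neg_iff by metis
      then have "Re (- a) < 0" using hurwitz_noninv[OF H] by blast
      then show False using ra by simp
    qed
  qed
  then show ?thesis by (rule cmat_eq_0)
qed

definition cvec :: "real^'n \<Rightarrow> real^'n \<Rightarrow> complex^'n" where
  "cvec a b = (\<chi> i. Complex (a $ i) (b $ i))"

lemma cmat_cvec: "cmat M *v cvec a b = cvec (M *v a) (M *v b)"
  by (simp add: vec_eq_iff cvec_def matrix_vector_mult_def complex_eq_iff Re_sum Im_sum)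

lemma smult_cvec: "Complex al be *s cvec a b = cvec (al *\<^sub>R a - be *\<^sub>R b) (be *\<^sub>R a + al *\<^sub>R b)"
  by (simp add: vec_eq_iff cvec_def complex_eq_iff)

lemma cvec_eq_iff: "cvec a b = cvec c d \<longleftrightarrow> a = c \<and> b = d"
  by (auto simp: vec_eq_iff cvec_def)

lemma cvec_0_iff: "cvec a b = 0 \<longleftrightarrow> a = 0 \<and> b = 0"
  by (auto simp: vec_eq_iff cvec_def complex_eq_iff)

lemma cvec_surj: "v = cvec (\<chi> i. Re (v $ i)) (\<chi> i. Im (v $ i))"
  by (simp add: vec_eq_iff cvec_def complex_eq_iff)

lemma hurwitz_real_iff:
  fixes M :: "real^'n^'n"
  shows "hurwitz M \<longleftrightarrow> (\<forall>a b al be. (a \<noteq> 0 \<or> b \<noteq> 0) \<and> M *v a = al *\<^sub>R a - be *\<^sub>R b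
      \<and> M *v b = be *\<^sub>R a + al *\<^sub>R b \<longrightarrow> al < 0)"
proof
  assume H: "hurwitz M"
  show "\<forall>a b al be. (a \<noteq> 0 \<or> b \<noteq> 0) \<and> M *v a = al *\<^sub>R a - be *\<^sub>R b
      \<and> M *v b = be *\<^sub>R a + al *\<^sub>R b \<longrightarrow> al < 0"
  proof (intro allI impI)
    fix a b al be
    assume h: "(a \<noteq> 0 \<or> b \<noteq> 0) \<and> M *v a = al *\<^sub>R a - be *\<^sub>R b \<and> M *v b = be *\<^sub>R a + al *\<^sub>R b"
    then have "cmat M *v cvec a b = Complex al be *s cvec a b"
      by (simp add: cmat_cvec smult_cvec)
    moreover have "cvec a b \<noteq> 0" using h by (simp add: cvec_0_iff)
    ultimately have "Re (Complex al be) < 0" using H unfolding hurwitz_def by blast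
    then show "al < 0" by simp
  qed
next
  assume R: "\<forall>a b al be. (a \<noteq> 0 \<or> b \<noteq> 0) \<and> M *v a = al *\<^sub>R a - be *\<^sub>R b
      \<and> M *v b = be *\<^sub>R a + al *\<^sub>R b \<longrightarrow> al < 0"
  show "hurwitz M" unfolding hurwitz_def
  proof (intro allI impI)
    fix lam :: complex and v :: "complex^'n"
    assume h: "v \<noteq> 0 \<and> cmat M *v v = lam *s v"
    define a where "a = (\<chi> i. Re (v $ i))"
    define b where "b = (\<chi> i. Im (v $ i))"
    have v: "v = cvec a b" unfolding a_def b_def by (rule cvec_surj)
    have l: "lam = Complex (Re lam) (Im lam)" by simp
    have "cvec (M *v a) (M *v b) = cvec (Re lam *\<^sub>R a - Im lam *\<^sub>R b) (Im lam *\<^sub>R a + Re lam *\<^sub>R b)"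
      using h by (metis v l cmat_cvec smult_cvec)
    then have "M *v a = Re lam *\<^sub>R a - Im lam *\<^sub>R b" "M *v b = Im lam *\<^sub>R a + Re lam *\<^sub>R b"
      by (simp_all add: cvec_eq_iff)
    moreover have "a \<noteq> 0 \<or> b \<noteq> 0" using h v cvec_0_iff by auto
    ultimately show "Re lam < 0" using R by blast
  qed
qed


definition psd :: "real^'n^'n \<Rightarrow> bool" where
  "psd X \<longleftrightarrow> (\<forall>x. 0 \<le> x \<bullet> (X *v x))"

definition symm :: "real^'n^'n \<Rightarrow> bool" where
  "symm X \<longleftrightarrow> transpose X = X"

lemma inner_mulv_transpose: "x \<bullet> (X *v y) = (transpose X *v x) \<bullet> (y::real^'n)"
  by (simp add: dot_lmul_matrix[symmetric])

lemma symm_inner: "symm X \<Longrightarrow> x \<bullet> (X *v y) = y \<bullet> (X *v (x::real^'n))"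
  unfolding symm_def by (metis inner_mulv_transpose inner_commute)

lemma quad_expand:
  "(x + t *\<^sub>R y) \<bullet> (X *v (x + t *\<^sub>R y)) =
     x \<bullet> (X *v x) + t * (x \<bullet> (X *v y)) + t * (y \<bullet> (X *v x)) + t^2 * (y \<bullet> (X *v (y::real^'n)))"
  by (simp add: matrix_vector_right_distrib matrix_vector_mult_scaleR inner_add_left inner_add_right power2_eq_square algebra_simps)

lemma quad_nonneg_lin0:
  fixes a b c :: real
  assumes "\<And>t. 0 \<le> a + 2 * t * b + t^2 * c" "0 \<le> c"
  shows "b^2 \<le> a * c"
proof (cases "c = 0")
  case True
  have "b = 0"
  proof (rule ccontr)
    assume "b \<noteq> 0"
    have "0 \<le> a + 2 * (- (\<bar>a\<bar> + 1) / (2 * b)) * b" using assms(1)[of "- (\<bar>a\<bar> + 1) / (2 * b)"] True by simp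
    also have "\<dots> = a - (\<bar>a\<bar> + 1)" using \<open>b \<noteq> 0\<close> by (simp add: field_simps)
    finally show False by simp
  qed
  then show ?thesis using True by simp
next
  case False
  then have c: "c > 0" using assms(2) by simp
  have "0 \<le> a + 2 * (- b / c) * b + (- b / c)^2 * c" by (rule assms(1))
  also have "\<dots> = a - b^2 / c" using c by (simp add: field_simps power2_eq_square)
  finally have "b^2 / c \<le> a" by simp
  then show ?thesis using c by (simp add: field_simps)
qed

lemma psd_cs:
  assumes "psd X" "symm X"
  shows "(x \<bullet> (X *v y))^2 \<le> (x \<bullet> (X *v x)) * (y \<bullet> (X *v (y::real^'n)))"
proof (rule quad_nonneg_lin0)
  fix t
  have "0 \<le> (x + t *\<^sub>R y) \<bullet> (X *v (x + t *\<^sub>R y))" using assms(1) by (simp add: psd_def)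
  also have "\<dots> = x \<bullet> (X *v x) + 2 * t * (x \<bullet> (X *v y)) + t^2 * (y \<bullet> (X *v y))"
    using symm_inner[OF assms(2), of y x] by (simp add: quad_expand)
  finally show "0 \<le> x \<bullet> (X *v x) + 2 * t * (x \<bullet> (X *v y)) + t^2 * (y \<bullet> (X *v y))" .
qed (use assms(1) in \<open>simp add: psd_def\<close>)

lemma psd_zero_quad:
  assumes "psd X" "symm X" "x \<bullet> (X *v x) = 0"
  shows "X *v x = (0::real^'n)"
proof -
  have "((X *v x) \<bullet> (X *v x))^2 \<le> ((X *v x) \<bullet> (X *v (X *v x))) * (x \<bullet> (X *v x))"
    by (rule psd_cs[OF assms(1,2)])
  then have "((X *v x) \<bullet> (X *v x))^2 \<le> 0" using assms(3) by simp
  then show ?thesis by simp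
qed

lemma norm_sq_vec: "(norm (v::real^'n))^2 = (\<Sum>i\<in>UNIV. (v $ i)^2)"
  unfolding power2_norm_eq_inner inner_vec_def by (simp add: power2_eq_square)

lemma norm_sq_mat: "(norm (A::real^'n^'m))^2 = (\<Sum>i\<in>UNIV. (norm (A $ i))^2)"
  by (simp add: power2_norm_eq_inner inner_vec_def)

lemma norm_mulv_le: "norm (A *v x) \<le> norm (A::real^'n^'m) * norm (x::real^'n)"
proof -
  have "(norm (A *v x))^2 = (\<Sum>i\<in>UNIV. (A $ i \<bullet> x)^2)"
    by (simp only: norm_sq_vec matrix_vector_mul_component)
  also have "\<dots> \<le> (\<Sum>i\<in>UNIV. (A $ i \<bullet> A $ i) * (x \<bullet> x))"
    by (intro sum_mono) (metis Cauchy_Schwarz_ineq)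
  also have "\<dots> = (norm A)^2 * (norm x)^2"
    by (simp add: power2_norm_eq_inner inner_vec_def sum_distrib_right)
  finally have "(norm (A *v x))^2 \<le> (norm A * norm x)^2" by (simp add: power_mult_distrib)
  then show ?thesis by (rule power2_le_imp_le) simp
qed

lemma quad_le_norm: "\<bar>x \<bullet> (X *v x)\<bar> \<le> norm X * (norm (x::real^'n))^2"
proof -
  have "\<bar>x \<bullet> (X *v x)\<bar> \<le> norm x * norm (X *v x)" by (rule Cauchy_Schwarz_ineq2)
  also have "\<dots> \<le> norm x * (norm X * norm x)" by (intro mult_left_mono norm_mulv_le) simp
  finally show ?thesis by (simp add: power2_eq_square mult_ac)
qed

section \<open>Lyapunov operator\<close>

definition lyap :: "real^'n^'n \<Rightarrow> real^'n^'n \<Rightarrow> real^'n^'n" where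
  "lyap M X = transpose M ** X + X ** M"

lemma lyap_linear: "linear (lyap M)"
  by (rule linearI) (simp_all add: lyap_def matrix_add_ldistrib matrix_add_rdistrib' matrix_scalar_ac scalar_matrix_assoc[symmetric] algebra_simps)

lemma lyap_diff: "lyap M (X - Y) = lyap M X - lyap M Y"
  by (rule linear_diff[OF lyap_linear])

lemma lyap_inj_op: "hurwitz M \<Longrightarrow> inj (lyap M)"
  unfolding inj_on_def by (metis lyap_diff lyap_inj lyap_def right_minus_eq)

lemma lyap_surj: "hurwitz M \<Longrightarrow> \<exists>X. lyap M X = W"
  using linear_injective_imp_surjective[OF lyap_linear lyap_inj_op] by (metis surj_def)

lemma transpose_add: "transpose (A + B) = transpose A + transpose B"
  by (simp add: transpose_def vec_eq_iff)
lemma transpose_diff: "transpose (A - B) = transpose A - transpose (B::'a::ab_group_add^'n^'m)"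
  by (simp add: transpose_def vec_eq_iff)
lemma transpose_neg: "transpose (- A) = - transpose (A::'a::ab_group_add^'n^'m)"
  by (simp add: transpose_def vec_eq_iff)
lemma transpose_zero: "transpose 0 = (0::'a::zero^'n^'m)"
  by (simp add: transpose_def vec_eq_iff)

lemma lyap_transpose: "lyap M (transpose X) = transpose (lyap M X)"
  by (simp only: lyap_def transpose_add matrix_transpose_mul transpose_transpose add.commute)

lemma lyap_symm:
  assumes "hurwitz M" "symm W" "lyap M X = W" shows "symm X"
proof -
  have "lyap M (transpose X) = lyap M X" using assms(2,3) by (simp add: lyap_transpose symm_def)
  then show ?thesis using lyap_inj_op[OF assms(1)] by (simp add: inj_eq symm_def)
qed


section \<open>Minimum of the quadratic form on the sphere\<close>

lemma quad_cont: "continuous_on S (\<lambda>x. x \<bullet> ((Y::real^'n^'n) *v x))"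
proof -
  have "bounded_linear (\<lambda>x. Y *v x)" by (simp add: linear_conv_bounded_linear)
  then have "continuous_on S (\<lambda>x. Y *v x)" by (rule linear_continuous_on)
  then show ?thesis by (intro continuous_on_inner continuous_on_id)
qed

lemma quad_min_ex: "\<exists>x. norm x = 1 \<and> (\<forall>y. norm y = 1 \<longrightarrow> x \<bullet> (Y *v x) \<le> y \<bullet> ((Y::real^'n^'n) *v y))"
proof -
  have "\<exists>x\<in>sphere 0 1. \<forall>y\<in>sphere 0 1. x \<bullet> (Y *v x) \<le> y \<bullet> (Y *v y)"
    by (rule continuous_attains_inf[OF compact_sphere _ quad_cont]) simp
  then show ?thesis by auto
qed

definition qmin :: "real^'n^'n \<Rightarrow> real^'n" where
  "qmin Y = (SOME x. norm x = 1 \<and> (\<forall>y. norm y = 1 \<longrightarrow> x \<bullet> (Y *v x) \<le> y \<bullet> (Y *v y)))"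

definition mq :: "real^'n^'n \<Rightarrow> real" where
  "mq Y = qmin Y \<bullet> (Y *v qmin Y)"

lemma qmin: "norm (qmin Y) = 1" "norm y = 1 \<Longrightarrow> mq Y \<le> y \<bullet> (Y *v y)"
  using someI_ex[OF quad_min_ex[of Y]] unfolding qmin_def[symmetric] mq_def by auto

lemma mq_lip: "mq Y1 \<le> mq Y2 + norm (Y1 - Y2)"
proof -
  let ?x = "qmin Y2"
  have "mq Y1 \<le> ?x \<bullet> (Y1 *v ?x)" using qmin by blast
  also have "\<dots> = mq Y2 + ?x \<bullet> ((Y1 - Y2) *v ?x)"
    by (simp add: mq_def matrix_vector_mult_diff_rdistrib inner_diff_right)
  also have "\<dots> \<le> mq Y2 + norm (Y1 - Y2)"
    using quad_le_norm[of ?x "Y1 - Y2"] qmin(1)[of Y2] by simp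
  finally show ?thesis .
qed

lemma quad_scale: "(c *\<^sub>R u) \<bullet> (Y *v (c *\<^sub>R u)) = c^2 * (u \<bullet> ((Y::real^'n^'n) *v u))"
  by (simp add: matrix_vector_mult_scaleR power2_eq_square)

lemma unit_quad_nonneg_psd:
  assumes "\<And>y. norm y = 1 \<Longrightarrow> 0 \<le> y \<bullet> ((Y::real^'n^'n) *v y)"
  shows "psd Y"
  unfolding psd_def
proof
  fix x :: "real^'n"
  show "0 \<le> x \<bullet> (Y *v x)"
  proof (cases "x = 0")
    case False
    define u where "u = (1 / norm x) *\<^sub>R x"
    have "norm u = 1" using False by (simp add: u_def)
    have "x = norm x *\<^sub>R u" using False by (simp add: u_def)
    then have "x \<bullet> (Y *v x) = (norm x)^2 * (u \<bullet> (Y *v u))" by (metis quad_scale)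
    then show ?thesis using assms[OF \<open>norm u = 1\<close>] by simp
  qed simp
qed

lemma mq_pos_imp_pd: fixes Y :: "real^'n^'n" assumes "mq Y > 0" shows "pos_def Y"
  unfolding pos_def_def
proof (intro allI impI)
  fix x :: "real^'n" assume "x \<noteq> 0"
  define u where "u = (1 / norm x) *\<^sub>R x"
  have "norm u = 1" using \<open>x \<noteq> 0\<close> by (simp add: u_def)
  have "x = norm x *\<^sub>R u" using \<open>x \<noteq> 0\<close> by (simp add: u_def)
  then have "x \<bullet> (Y *v x) = (norm x)^2 * (u \<bullet> (Y *v u))" by (metis quad_scale)
  moreover have "u \<bullet> (Y *v u) > 0" using qmin(2)[OF \<open>norm u = 1\<close>, of Y] assms by simp
  ultimately show "x \<bullet> (Y *v x) > 0" using \<open>x \<noteq> 0\<close> by simp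
qed

section \<open>Homotopy\<close>

definition Ms :: "real^'n^'n \<Rightarrow> real \<Rightarrow> real^'n^'n" where
  "Ms M s = (1 - s) *\<^sub>R M - s *\<^sub>R mat 1"

lemma hurwitz_Ms:
  fixes M :: "real^'n^'n"
  assumes H: "hurwitz M" and s: "0 \<le> s" "s \<le> 1"
  shows "hurwitz (Ms M s)"
  unfolding hurwitz_real_iff
proof (intro allI impI)
  fix a b :: "real^'n" and al be
  assume h: "(a \<noteq> 0 \<or> b \<noteq> 0) \<and> Ms M s *v a = al *\<^sub>R a - be *\<^sub>R b \<and> Ms M s *v b = be *\<^sub>R a + al *\<^sub>R b"
  have ea: "(1 - s) *\<^sub>R (M *v a) = (al + s) *\<^sub>R a - be *\<^sub>R b"
    using h by (simp add: Ms_def matrix_vector_mult_diff_rdistrib scaleR_matrix_vector_assoc[symmetric] algebra_simps)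
  have eb: "(1 - s) *\<^sub>R (M *v b) = be *\<^sub>R a + (al + s) *\<^sub>R b"
    using h by (simp add: Ms_def matrix_vector_mult_diff_rdistrib scaleR_matrix_vector_assoc[symmetric] algebra_simps)
  show "al < 0"
  proof (cases "s = 1")
    case True
    have "a \<bullet> ((al + 1) *\<^sub>R a - be *\<^sub>R b) + b \<bullet> (be *\<^sub>R a + (al + 1) *\<^sub>R b) = 0"
      using ea eb True by simp
    then have "(al + 1) * (a \<bullet> a + b \<bullet> b) = 0"
      by (simp add: inner_diff_right inner_add_right inner_commute algebra_simps)
    moreover have "a \<bullet> a + b \<bullet> b > 0" using h
      by (metis add_nonneg_pos add_pos_nonneg inner_gt_zero_iff inner_ge_zero)
    ultimately have "al = -1" by simp
    then show ?thesis by simp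
  next
    case False
    then have s1: "1 - s > 0" using s by simp
    define al' where "al' = (al + s) / (1 - s)"
    define be' where "be' = be / (1 - s)"
    have "M *v a = al' *\<^sub>R a - be' *\<^sub>R b"
    proof -
      have "M *v a = (1 / (1 - s)) *\<^sub>R ((1 - s) *\<^sub>R (M *v a))" using s1 by simp
      also have "\<dots> = al' *\<^sub>R a - be' *\<^sub>R b" unfolding ea al'_def be'_def
        by (simp add: algebra_simps divide_inverse)
      finally show ?thesis .
    qed
    moreover have "M *v b = be' *\<^sub>R a + al' *\<^sub>R b"
    proof -
      have "M *v b = (1 / (1 - s)) *\<^sub>R ((1 - s) *\<^sub>R (M *v b))" using s1 by simp
      also have "\<dots> = be' *\<^sub>R a + al' *\<^sub>R b" unfolding eb al'_def be'_def
        by (simp add: algebra_simps divide_inverse)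
      finally show ?thesis .
    qed
    ultimately have "al' < 0" using H h unfolding hurwitz_real_iff by blast
    then have "al + s < 0" using s1 by (simp add: al'_def divide_less_0_iff)
    then show ?thesis using s by simp
  qed
qed

lemma lyap_Ms: "lyap (Ms M s) Y = lyap M Y - s *\<^sub>R (lyap M Y + (Y + Y))"
proof -
  have t: "transpose (Ms M s) = (1 - s) *\<^sub>R transpose M - s *\<^sub>R mat 1"
    by (simp add: Ms_def transpose_diff transpose_scalar)
  have "lyap (Ms M s) Y = (1 - s) *\<^sub>R (transpose M ** Y) - s *\<^sub>R Y + ((1 - s) *\<^sub>R (Y ** M) - s *\<^sub>R Y)"
    unfolding lyap_def t unfolding Ms_def
    by (simp only: matrix_diff_rdistrib' matrix_diff_ldistrib' matrix_scalar_ac scalar_matrix_assoc[symmetric]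
        matrix_mul_lid matrix_mul_rid)
  then show ?thesis unfolding lyap_def by (simp add: algebra_simps)
qed


lemma neg_mulv: "(- A) *v x = - (A *v (x::real^'n))"
  by (simp add: vec_eq_iff matrix_vector_mult_def sum_negf)

lemma half_double: "(1/2) *\<^sub>R (Y + Y) = (Y::real^'n^'n)"
proof -
  have "(1/2) *\<^sub>R (Y + Y) = ((1/2) + (1/2)) *\<^sub>R Y" by (simp only: scaleR_add_left scaleR_add_right)
  then show ?thesis by simp
qed

lemma lyap_pd:
  fixes M W X :: "real^'n^'n"
  assumes H: "hurwitz M" and Ws: "symm W" and Wpd: "pos_def W" and eq: "lyap M X = - W"
  shows "pos_def X"
proof -
  define Xs where "Xs s = (SOME Y. lyap (Ms M s) Y = - W)" for s
  have HM: "hurwitz (Ms M s)" if "s \<in> {0..1}" for s using hurwitz_Ms[OF H] that by auto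
  have Xs_eq: "lyap (Ms M s) (Xs s) = - W" if "s \<in> {0..1}" for s
    unfolding Xs_def by (rule someI_ex) (rule lyap_surj[OF HM[OF that]])
  have mW: "symm (- W)" using Ws by (simp add: symm_def transpose_neg)
  have Xs_sym: "symm (Xs s)" if "s \<in> {0..1}" for s using lyap_symm[OF HM[OF that] mW Xs_eq[OF that]] .
  have Ms0: "Ms M 0 = M" by (simp add: Ms_def)
  have "lyap M (Xs 0) = lyap M X" using Xs_eq[of 0] eq Ms0 by simp
  then have X0: "Xs 0 = X" by (rule injD[OF lyap_inj_op[OF H]])
  have X1: "Xs 1 = (1/2) *\<^sub>R W"
  proof -
    have "lyap (Ms M 1) Y = - (Y + Y)" for Y by (simp add: lyap_Ms)
    then have "Xs 1 + Xs 1 = W" using Xs_eq[of 1] by simp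
    then show ?thesis using half_double[of "Xs 1"] by simp
  qed
  define G where "G Y = lyap M Y + (Y + Y)" for Y
  have linG: "linear G"
    by (rule linearI) (simp_all add: G_def lyap_def matrix_add_ldistrib matrix_add_rdistrib' matrix_scalar_ac
        scalar_matrix_assoc[symmetric] algebra_simps)
  obtain K where K: "K > 0" "\<And>Y. norm (G Y) \<le> K * norm Y" using linear_bounded_pos[OF linG] by blast
  have LMs: "lyap (Ms M s) Y = lyap (Ms M s0) Y - (s - s0) *\<^sub>R G Y" for s s0 Y
    by (simp add: lyap_Ms G_def algebra_simps)
  have cont: "\<exists>d>0. \<forall>s\<in>{0..1}. \<bar>s - s0\<bar> < d \<longrightarrow> norm (Xs s - Xs s0) < e"
    if s0: "s0 \<in> {0..1}" and e: "e > 0" for s0 e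
  proof -
    obtain c where c: "c > 0" "\<And>Y. c * norm Y \<le> norm (lyap (Ms M s0) Y)"
      using linear_inj_bounded_below_pos[OF lyap_linear lyap_inj_op[OF HM[OF s0]]] by blast
    define n0 where "n0 = norm (Xs s0)"
    define d where "d = min (c / (2*K)) (e * c / (2 * K * (n0 + 1)))"
    have n0: "n0 \<ge> 0" by (simp add: n0_def)
    have dpos: "d > 0" using c K e n0 by (simp add: d_def)
    show ?thesis
    proof (intro exI[of _ d] conjI dpos ballI impI)
      fix s assume s: "s \<in> {0..1}" "\<bar>s - s0\<bar> < d"
      define D where "D = Xs s - Xs s0"
      have 1: "lyap (Ms M s) D = (s - s0) *\<^sub>R G (Xs s0)"
        using Xs_eq[OF s(1)] Xs_eq[OF s0] LMs[of s "Xs s0" s0] by (simp add: D_def lyap_diff)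
      have 2: "lyap (Ms M s0) D = (s - s0) *\<^sub>R G (Xs s0) + (s - s0) *\<^sub>R G D"
        using 1 LMs[of s D s0] by (simp add: algebra_simps)
      have "c * norm D \<le> norm (lyap (Ms M s0) D)" by (rule c(2))
      also have "\<dots> \<le> norm ((s - s0) *\<^sub>R G (Xs s0)) + norm ((s - s0) *\<^sub>R G D)"
        unfolding 2 by (rule norm_triangle_ineq)
      also have "\<dots> = \<bar>s - s0\<bar> * norm (G (Xs s0)) + \<bar>s - s0\<bar> * norm (G D)" by simp
      also have "\<dots> \<le> \<bar>s - s0\<bar> * (K * n0) + \<bar>s - s0\<bar> * (K * norm D)"
        unfolding n0_def by (intro add_mono mult_left_mono K(2)) auto
      finally have 3: "c * norm D \<le> \<bar>s - s0\<bar> * K * n0 + (\<bar>s - s0\<bar> * K) * norm D"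
        by (simp add: algebra_simps)
      have "\<bar>s - s0\<bar> < c / (2*K)" using s(2) by (simp add: d_def)
      then have "\<bar>s - s0\<bar> * K \<le> c / 2" using K(1) by (simp add: field_simps)
      then have "(\<bar>s - s0\<bar> * K) * norm D \<le> c / 2 * norm D" by (intro mult_right_mono) auto
      with 3 have 4: "c / 2 * norm D \<le> \<bar>s - s0\<bar> * K * n0" by simp
      have "\<bar>s - s0\<bar> < e * c / (2 * K * (n0 + 1))" using s(2) by (simp add: d_def)
      moreover have "2 * K * (n0 + 1) > 0" using K(1) n0 by simp
      ultimately have "\<bar>s - s0\<bar> * (2 * K * (n0 + 1)) < e * c" by (simp add: pos_less_divide_eq)
      moreover have "\<bar>s - s0\<bar> * K * n0 \<le> \<bar>s - s0\<bar> * K * (n0 + 1)"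
        using K(1) by (intro mult_left_mono) auto
      ultimately have "c / 2 * norm D < e * c / 2" using 4 by (simp add: algebra_simps)
      then show "norm (Xs s - Xs s0) < e" using c(1) by (simp add: D_def field_simps)
    qed
  qed
  define m where "m s = mq (Xs s)" for s
  have mcont: "continuous_on {0..1} m"
    unfolding continuous_on_iff
  proof (intro ballI allI impI)
    fix s0 e :: real assume s0: "s0 \<in> {0..1}" and e: "e > 0"
    obtain d where d: "d > 0" "\<forall>s\<in>{0..1}. \<bar>s - s0\<bar> < d \<longrightarrow> norm (Xs s - Xs s0) < e"
      using cont[OF s0 e] by blast
    show "\<exists>d>0. \<forall>x'\<in>{0..1}. dist x' s0 < d \<longrightarrow> dist (m x') (m s0) < e"
    proof (intro exI[of _ d] conjI d(1) ballI impI)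
      fix s assume s: "s \<in> {0..1}" "dist s s0 < d"
      then have n: "norm (Xs s - Xs s0) < e" using d(2) by (simp add: dist_real_def)
      have "m s \<le> m s0 + norm (Xs s - Xs s0)" unfolding m_def by (rule mq_lip)
      moreover have "m s0 \<le> m s + norm (Xs s - Xs s0)" unfolding m_def
        using mq_lip[of "Xs s0" "Xs s"] by (simp add: norm_minus_commute)
      ultimately show "dist (m s) (m s0) < e" using n by (simp add: dist_real_def abs_le_iff)
    qed
  qed
  have m1: "m 1 > 0"
  proof -
    let ?q = "qmin (Xs 1)"
    have "?q \<noteq> 0" using qmin(1)[of "Xs 1"] by auto
    then have "?q \<bullet> (W *v ?q) > 0" using Wpd by (simp add: pos_def_def)
    then show ?thesis by (simp add: m_def mq_def X1 scaleR_matrix_vector_assoc[symmetric])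
  qed
  show "pos_def X"
  proof (rule ccontr)
    assume nX: "\<not> pos_def X"
    have m0: "m 0 \<le> 0"
    proof (rule ccontr)
      assume "\<not> m 0 \<le> 0"
      then have "mq X > 0" by (simp add: m_def X0)
      then show False using nX mq_pos_imp_pd by blast
    qed
    obtain s where s: "0 \<le> s" "s \<le> 1" "m s = 0" using IVT'[of m 0 0 1] m0 m1 mcont by auto
    have sI: "s \<in> {0..1}" using s by simp
    let ?Y = "Xs s"
    let ?x = "qmin ?Y"
    have psdY: "psd ?Y"
      by (rule unit_quad_nonneg_psd) (use s(3) qmin(2)[of _ ?Y] in \<open>auto simp: m_def\<close>)
    have "?x \<bullet> (?Y *v ?x) = 0" using s(3) by (simp add: m_def mq_def)
    then have Yx: "?Y *v ?x = 0" by (rule psd_zero_quad[OF psdY Xs_sym[OF sI]])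
    have "lyap (Ms M s) ?Y *v ?x = ?Y *v (Ms M s *v ?x)"
      by (simp add: lyap_def matrix_vector_mult_add_rdistrib matrix_vector_mul_assoc[symmetric] Yx)
    then have "?x \<bullet> (lyap (Ms M s) ?Y *v ?x) = (Ms M s *v ?x) \<bullet> (?Y *v ?x)"
      using symm_inner[OF Xs_sym[OF sI]] by simp
    also have "\<dots> = 0" by (simp add: Yx)
    finally have "?x \<bullet> (W *v ?x) = 0" using Xs_eq[OF sI] by (simp add: neg_mulv)
    moreover have "?x \<noteq> 0" using qmin(1)[of ?Y] by auto
    ultimately show False using Wpd by (auto simp: pos_def_def)
  qed
qed


lemma pd_plus_psd: fixes W :: "real^'n^'n" assumes "psd W" shows "pos_def (W + mat 1)"
  unfolding pos_def_def
proof (intro allI impI)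
  fix x :: "real^'n" assume "x \<noteq> 0"
  have "x \<bullet> ((W + mat 1) *v x) = x \<bullet> (W *v x) + x \<bullet> x"
    by (simp add: matrix_vector_mult_add_rdistrib inner_add_right)
  then show "x \<bullet> ((W + mat 1) *v x) > 0" using assms \<open>x \<noteq> 0\<close>
    by (simp add: psd_def add_nonneg_pos)
qed

lemma lyap_psd:
  fixes M W X :: "real^'n^'n"
  assumes H: "hurwitz M" and Ws: "symm W" and Wpsd: "psd W" and eq: "lyap M X = - W"
  shows "psd X"
proof -
  obtain XI where XI: "lyap M XI = - mat 1" using lyap_surj[OF H] by blast
  have "x \<bullet> (X *v x) \<ge> 0" for x
  proof (rule ccontr)
    assume neg: "\<not> x \<bullet> (X *v x) \<ge> 0"
    define a where "a = x \<bullet> (X *v x)"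
    define b where "b = x \<bullet> (XI *v x)"
    define e where "e = (\<bar>b\<bar> + 1) / (- a)"
    have a: "a < 0" using neg by (simp add: a_def)
    have e: "e > 0" using a unfolding e_def by (intro divide_pos_pos) auto
    have WI: "psd (e *\<^sub>R W)" using Wpsd e by (simp add: psd_def scaleR_matrix_vector_assoc[symmetric])
    have "lyap M (e *\<^sub>R X + XI) = - (e *\<^sub>R W + mat 1)"
      using eq XI by (simp add: linear_add[OF lyap_linear] linear_scale[OF lyap_linear])
    moreover have "symm (e *\<^sub>R W + mat 1)" using Ws by (simp add: symm_def transpose_add transpose_scalar)
    ultimately have pd: "pos_def (e *\<^sub>R X + XI)"
      using lyap_pd[OF H _ pd_plus_psd[OF WI]] by blast
    have "x \<noteq> 0" using a by (auto simp: a_def)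
    then have "0 < x \<bullet> ((e *\<^sub>R X + XI) *v x)" using pd by (simp add: pos_def_def)
    also have "\<dots> = e * a + b"
      by (simp add: a_def b_def matrix_vector_mult_add_rdistrib inner_add_right scaleR_matrix_vector_assoc[symmetric])
    finally have 1: "0 < e * a + b" .
    have "e * a = - (\<bar>b\<bar> + 1)" using a by (simp add: e_def)
    then show False using 1 by linarith
  qed
  then show ?thesis by (simp add: psd_def)
qed


section \<open>Norm and trace estimates\<close>

lemma norm_sq_entries: "(norm (A::real^'n^'m))^2 = (\<Sum>i\<in>UNIV. \<Sum>j\<in>UNIV. (A $ i $ j)^2)"
  by (simp add: norm_sq_mat norm_sq_vec)

lemma norm_transpose: "norm (transpose (A::real^'n^'m)) = norm A"
proof -
  have "(norm (transpose A))^2 = (norm A)^2"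
    unfolding norm_sq_entries by (simp add: transpose_def) (rule sum.swap)
  then show ?thesis by (simp add: power2_eq_iff_nonneg)
qed

lemma row_mult: "((A::real^'k^'m) ** (B::real^'n^'k)) $ i = transpose B *v (A $ i)"
  by (auto simp: vec_eq_iff matrix_matrix_mult_def matrix_vector_mult_def transpose_def mult.commute intro!: sum.cong)

lemma norm_mult_le: "norm ((A::real^'k^'m) ** (B::real^'n^'k)) \<le> norm A * norm B"
proof -
  have "(norm (A ** B))^2 = (\<Sum>i\<in>UNIV. (norm ((A ** B) $ i))^2)" by (rule norm_sq_mat)
  also have "\<dots> \<le> (\<Sum>i\<in>UNIV. (norm B * norm (A $ i))^2)"
  proof (rule sum_mono)
    fix i
    have "norm ((A ** B) $ i) \<le> norm B * norm (A $ i)"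
      using norm_mulv_le[of "transpose B" "A $ i"] by (simp add: row_mult norm_transpose)
    then show "(norm ((A ** B) $ i))^2 \<le> (norm B * norm (A $ i))^2"
      by (intro power_mono) auto
  qed
  also have "\<dots> = (norm A * norm B)^2"
    by (simp add: power_mult_distrib norm_sq_mat sum_distrib_left mult.commute)
  finally show ?thesis by (rule power2_le_imp_le) simp
qed

lemma entry_quad: "axis i 1 \<bullet> ((Y::real^'n^'n) *v axis j 1) = Y $ i $ j"
  by (simp add: matrix_vector_mult_basis inner_axis' column_def)

lemma trace_sum: "trace (Y::real^'n^'n) = (\<Sum>i\<in>UNIV. Y $ i $ i)"
  by (simp add: trace_def)

lemma trace_psd_nonneg: "psd Y \<Longrightarrow> 0 \<le> trace (Y::real^'n^'n)"
  unfolding trace_sum by (intro sum_nonneg) (metis entry_quad psd_def)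

lemma trace_le_norm: "trace (Y::real^'n^'n) \<le> real CARD('n) * norm Y"
proof -
  have "trace Y \<le> (\<Sum>i\<in>(UNIV::'n set). norm Y)"
    unfolding trace_sum
  proof (rule sum_mono)
    fix i :: 'n
    have "Y $ i $ i \<le> \<bar>Y $ i $ i\<bar>" by simp
    also have "\<dots> \<le> norm (Y $ i)" by (rule component_le_norm_cart)
    also have "\<dots> \<le> norm Y" by (rule Finite_Cartesian_Product.norm_nth_le)
    finally show "Y $ i $ i \<le> norm Y" .
  qed
  then show ?thesis by simp
qed

lemma norm_le_trace:
  assumes "psd Y" "symm Y"
  shows "norm (Y::real^'n^'n) \<le> trace Y"
proof -
  have "(norm Y)^2 = (\<Sum>i\<in>UNIV. \<Sum>j\<in>UNIV. (Y $ i $ j)^2)" by (rule norm_sq_entries)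
  also have "\<dots> \<le> (\<Sum>i\<in>UNIV. \<Sum>j\<in>UNIV. Y $ i $ i * Y $ j $ j)"
  proof (intro sum_mono)
    fix i j
    show "(Y $ i $ j)^2 \<le> Y $ i $ i * Y $ j $ j"
      using psd_cs[OF assms, of "axis i 1" "axis j 1"] by (simp add: entry_quad)
  qed
  also have "\<dots> = (trace Y)^2"
    by (simp add: trace_sum power2_eq_square sum_product)
  finally show ?thesis by (rule power2_le_imp_le) (rule trace_psd_nonneg[OF assms(1)])
qed

lemma trace_mono_psd: "psd (Z - X) \<Longrightarrow> trace X \<le> trace (Z::real^'n^'n)"
  using trace_psd_nonneg[of "Z - X"] by (simp add: trace_sub)


lemma transpose_mul_sym: "transpose (A ** B) = transpose B ** transpose (A::real^'k^'m)"
  by (rule matrix_transpose_mul)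

lemma symm_gram: "symm (transpose A ** (A::real^'n^'q))"
  by (simp add: symm_def matrix_transpose_mul)

lemma quad_gram: "x \<bullet> ((transpose A ** (A::real^'n^'q)) *v x) = (A *v x) \<bullet> (A *v x)"
proof -
  have "x \<bullet> ((transpose A ** A) *v x) = x \<bullet> (transpose A *v (A *v x))"
    by (simp only: matrix_vector_mul_assoc)
  also have "\<dots> = (A *v x) \<bullet> (A *v x)" using inner_mulv_transpose[of x "transpose A" "A *v x"] by simp
  finally show ?thesis .
qed

lemma psd_gram: "psd (transpose A ** (A::real^'n^'q))"
  by (simp add: psd_def quad_gram)

lemma psd_scale: "psd X \<Longrightarrow> 0 \<le> c \<Longrightarrow> psd (c *\<^sub>R X)"
  by (simp add: psd_def scaleR_matrix_vector_assoc[symmetric])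

lemma psd_add: "psd X \<Longrightarrow> psd Y \<Longrightarrow> psd (X + Y)"
  by (simp add: psd_def matrix_vector_mult_add_rdistrib inner_add_right)

lemma symm_scale: "symm X \<Longrightarrow> symm (c *\<^sub>R X)"
  by (simp add: symm_def transpose_scalar)

lemma symm_add: "symm X \<Longrightarrow> symm Y \<Longrightarrow> symm (X + Y)"
  by (simp add: symm_def transpose_add)

lemma symm_diff: "symm X \<Longrightarrow> symm Y \<Longrightarrow> symm (X - Y)"
  by (simp add: symm_def transpose_diff)

lemma lyap_shift:
  fixes N X :: "real^'n^'n" and D :: "real^'q^'n" and H :: "real^'n^'q"
  assumes Xs: "symm X"
  shows "lyap (N + D ** H) X = lyap N X + transpose H ** (transpose D ** X) + transpose (transpose D ** X) ** H"
proof -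
  have 1: "transpose (D ** H) ** X = transpose H ** (transpose D ** X)"
    by (simp add: matrix_transpose_mul matrix_mul_assoc)
  have 2: "X ** (D ** H) = transpose (transpose D ** X) ** H"
    using Xs by (simp add: matrix_transpose_mul matrix_mul_assoc symm_def)
  show ?thesis
    unfolding lyap_def transpose_add matrix_add_rdistrib' matrix_add_ldistrib 1 2
    by (simp add: algebra_simps)
qed

lemma gram_expand: "transpose (A - B) ** (A - B) = transpose A ** A - transpose A ** B - (transpose B ** A - transpose B ** (B::real^'n^'q))"
  by (simp only: transpose_diff matrix_diff_rdistrib' matrix_diff_ldistrib') (simp add: algebra_simps)

lemma gram_expand_add: "transpose (A + B) ** (A + B) = transpose A ** A + transpose A ** B + (transpose B ** A + transpose B ** (B::real^'n^'q))"
  by (simp only: transpose_add matrix_add_rdistrib' matrix_add_ldistrib) (simp add: algebra_simps)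

lemma riccati_X:
  fixes AK Q PK P :: "real^'n^'n" and D :: "real^'q^'n" and L LK :: "real^'n^'q" and g :: real
  assumes PKs: "symm PK"
    and U: "transpose D ** PK = g *\<^sub>R LK"
    and ARE: "transpose AK ** PK + PK ** AK + Q + g *\<^sub>R (transpose LK ** LK) = 0"
    and Peq: "transpose (AK + D ** L) ** P + P ** (AK + D ** L) + Q - g *\<^sub>R (transpose L ** L) = 0"
  shows "lyap (AK + D ** L) (PK - P) = - (g *\<^sub>R (transpose (L - LK) ** (L - LK)))"
proof -
  have 1: "lyap (AK + D ** L) PK = transpose AK ** PK + PK ** AK + g *\<^sub>R (transpose L ** LK) + g *\<^sub>R (transpose LK ** L)"
    using lyap_shift[OF PKs, of AK D L] unfolding U
    by (simp add: lyap_def transpose_scalar matrix_scalar_ac scalar_matrix_assoc[symmetric])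
  have 2: "lyap (AK + D ** L) P = g *\<^sub>R (transpose L ** L) - Q"
    using Peq unfolding lyap_def by (simp add: algebra_simps eq_diff_eq)
  have 3: "transpose AK ** PK + PK ** AK = - Q - g *\<^sub>R (transpose LK ** LK)"
    using ARE by (simp add: algebra_simps eq_neg_iff_add_eq_0)
  have "lyap (AK + D ** L) (PK - P) = lyap (AK + D ** L) PK - lyap (AK + D ** L) P" by (rule lyap_diff)
  also have "\<dots> = (transpose AK ** PK + PK ** AK) + g *\<^sub>R (transpose L ** LK) + g *\<^sub>R (transpose LK ** L)
      - (g *\<^sub>R (transpose L ** L) - Q)" unfolding 1 2 ..
  also have "\<dots> = (- Q - g *\<^sub>R (transpose LK ** LK)) + g *\<^sub>R (transpose L ** LK) + g *\<^sub>R (transpose LK ** L)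
      - (g *\<^sub>R (transpose L ** L) - Q)" unfolding 3 ..
  also have "\<dots> = - (g *\<^sub>R (transpose L ** L - transpose L ** LK - (transpose LK ** L - transpose LK ** LK)))"
    by (simp add: algebra_simps)
  also have "\<dots> = - (g *\<^sub>R (transpose (L - LK) ** (L - LK)))" by (simp only: gram_expand)
  finally show ?thesis .
qed

lemma riccati_step:
  fixes AK X :: "real^'n^'n" and D :: "real^'q^'n" and L L' LK :: "real^'n^'q" and g :: real
  assumes Xs: "symm X"
    and DX: "transpose D ** X = - (g *\<^sub>R (L' - LK))"
    and eq: "lyap (AK + D ** L) X = - (g *\<^sub>R (transpose (L - LK) ** (L - LK)))"
  shows "lyap (AK + D ** L') X = - (g *\<^sub>R (transpose (L - L') ** (L - L') + transpose (L' - LK) ** (L' - LK)))"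
proof -
  define H where "H = L - L'"
  define F where "F = L' - LK"
  have e1: "AK + D ** L = (AK + D ** L') + D ** H" by (simp add: H_def matrix_diff_ldistrib')
  have e2: "L - LK = H + F" by (simp add: H_def F_def)
  have "lyap (AK + D ** L) X = lyap (AK + D ** L') X - g *\<^sub>R (transpose H ** F) - g *\<^sub>R (transpose F ** H)"
    unfolding e1 lyap_shift[OF Xs] DX F_def[symmetric]
    by (simp add: transpose_neg transpose_scalar matrix_neg_right matrix_neg_left matrix_scalar_ac scalar_matrix_assoc[symmetric])
  then have "lyap (AK + D ** L') X = - (g *\<^sub>R (transpose (H + F) ** (H + F))) + g *\<^sub>R (transpose H ** F) + g *\<^sub>R (transpose F ** H)"
    using eq e2 by (simp add: algebra_simps)
  also have "\<dots> = - (g *\<^sub>R (transpose H ** H + transpose F ** F))"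
    unfolding gram_expand_add by (simp add: algebra_simps)
  finally show ?thesis by (simp add: H_def F_def)
qed

lemma riccati_K:
  fixes AK X :: "real^'n^'n" and D :: "real^'q^'n" and L' LK F' :: "real^'n^'q" and g :: real
  assumes Xs: "symm X"
    and DX: "transpose D ** X = - (g *\<^sub>R F')"
    and eq: "lyap (AK + D ** L') X = - (g *\<^sub>R (transpose (L' - LK) ** (L' - LK)))"
  shows "lyap (AK + D ** LK) X = - (g *\<^sub>R (transpose ((L' - LK) - F') ** ((L' - LK) - F'))) + g *\<^sub>R (transpose F' ** F')"
proof -
  define F where "F = L' - LK"
  have e1: "AK + D ** L' = (AK + D ** LK) + D ** F" by (simp add: F_def matrix_diff_ldistrib')
  have "lyap (AK + D ** L') X = lyap (AK + D ** LK) X - g *\<^sub>R (transpose F ** F') - g *\<^sub>R (transpose F' ** F)"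
    unfolding e1 lyap_shift[OF Xs] DX
    by (simp add: transpose_neg transpose_scalar matrix_neg_right matrix_neg_left matrix_scalar_ac scalar_matrix_assoc[symmetric])
  then have "lyap (AK + D ** LK) X = - (g *\<^sub>R (transpose F ** F)) + g *\<^sub>R (transpose F ** F') + g *\<^sub>R (transpose F' ** F)"
    using eq by (simp add: F_def[symmetric] algebra_simps)
  also have "\<dots> = - (g *\<^sub>R (transpose (F - F') ** (F - F'))) + g *\<^sub>R (transpose F' ** F')"
    unfolding gram_expand by (simp add: algebra_simps)
  finally show ?thesis by (simp add: F_def)
qed


lemma quad_lyap: "symm X \<Longrightarrow> a \<bullet> (lyap M X *v a) = 2 * ((M *v a) \<bullet> (X *v (a::real^'n)))"
proof -
  assume Xs: "symm X"
  have "a \<bullet> (lyap M X *v a) = a \<bullet> (transpose M *v (X *v a)) + a \<bullet> (X *v (M *v a))"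
    by (simp add: lyap_def matrix_vector_mult_add_rdistrib inner_add_right matrix_vector_mul_assoc[symmetric])
  also have "a \<bullet> (transpose M *v (X *v a)) = (M *v a) \<bullet> (X *v a)"
    using inner_mulv_transpose[of a "transpose M" "X *v a"] by simp
  also have "a \<bullet> (X *v (M *v a)) = (M *v a) \<bullet> (X *v a)" using symm_inner[OF Xs] by simp
  finally show ?thesis by simp
qed

lemma hurwitz_step:
  fixes AK X :: "real^'n^'n" and D :: "real^'q^'n" and L' LK H :: "real^'n^'q" and g :: real
  assumes HK: "hurwitz (AK + D ** LK)" and g: "g > 0" and Xs: "symm X" and Xp: "psd X"
    and eq: "lyap (AK + D ** L') X = - (g *\<^sub>R (transpose H ** H + transpose (L' - LK) ** (L' - LK)))"
  shows "hurwitz (AK + D ** L')"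
  unfolding hurwitz_real_iff
proof (intro allI impI)
  fix a b :: "real^'n" and al be :: real
  define M where "M = AK + D ** L'"
  define F where "F = L' - LK"
  assume h: "(a \<noteq> 0 \<or> b \<noteq> 0) \<and> (AK + D ** L') *v a = al *\<^sub>R a - be *\<^sub>R b
      \<and> (AK + D ** L') *v b = be *\<^sub>R a + al *\<^sub>R b"
  then have ha: "M *v a = al *\<^sub>R a - be *\<^sub>R b" and hb: "M *v b = be *\<^sub>R a + al *\<^sub>R b"
    by (simp_all add: M_def)
  show "al < 0"
  proof (rule ccontr)
    assume "\<not> al < 0"
    then have al: "al \<ge> 0" by simp
    have qW: "x \<bullet> (lyap M X *v x) = - g * ((H *v x) \<bullet> (H *v x) + (F *v x) \<bullet> (F *v x))" for x
      using eq unfolding M_def[symmetric] F_def[symmetric]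
      by (simp add: neg_mulv scaleR_matrix_vector_assoc[symmetric] matrix_vector_mult_add_rdistrib inner_add_right quad_gram)
    have "a \<bullet> (lyap M X *v a) + b \<bullet> (lyap M X *v b) = 2 * ((M *v a) \<bullet> (X *v a) + (M *v b) \<bullet> (X *v b))"
      by (simp add: quad_lyap[OF Xs])
    also have "\<dots> = 2 * al * (a \<bullet> (X *v a) + b \<bullet> (X *v b))"
      using symm_inner[OF Xs, of a b]
      by (simp add: ha hb inner_diff_left inner_add_left inner_commute algebra_simps)
    finally have S: "a \<bullet> (lyap M X *v a) + b \<bullet> (lyap M X *v b) = 2 * al * (a \<bullet> (X *v a) + b \<bullet> (X *v b))" .
    have "0 \<le> 2 * al * (a \<bullet> (X *v a) + b \<bullet> (X *v b))" using al Xp by (simp add: psd_def)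
    then have "0 \<le> - g * ((H *v a) \<bullet> (H *v a) + (F *v a) \<bullet> (F *v a)) - g * ((H *v b) \<bullet> (H *v b) + (F *v b) \<bullet> (F *v b))"
      using S qW[of a] qW[of b] by simp
    then have 5: "0 \<le> - g * ((H *v a) \<bullet> (H *v a) + (F *v a) \<bullet> (F *v a) + ((H *v b) \<bullet> (H *v b) + (F *v b) \<bullet> (F *v b)))"
      by (simp only: right_diff_distrib distrib_left)
    have 6: "(H *v a) \<bullet> (H *v a) + (F *v a) \<bullet> (F *v a) + ((H *v b) \<bullet> (H *v b) + (F *v b) \<bullet> (F *v b)) \<le> 0"
    proof (rule ccontr)
      assume "\<not> ?thesis"
      then have "0 < g * ((H *v a) \<bullet> (H *v a) + (F *v a) \<bullet> (F *v a) + ((H *v b) \<bullet> (H *v b) + (F *v b) \<bullet> (F *v b)))"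
        using g by (intro mult_pos_pos) auto
      then show False using 5 by linarith
    qed
    have i1: "0 \<le> (H *v a) \<bullet> (H *v a)" "0 \<le> (F *v a) \<bullet> (F *v a)" "0 \<le> (H *v b) \<bullet> (H *v b)" "0 \<le> (F *v b) \<bullet> (F *v b)"
      by (rule inner_ge_zero)+
    have "(F *v a) \<bullet> (F *v a) = 0" "(F *v b) \<bullet> (F *v b) = 0" using 6 i1 by linarith+
    then have Fa: "F *v a = 0" and Fb: "F *v b = 0" by simp_all
    have MK: "M = (AK + D ** LK) + D ** F" by (simp add: M_def F_def matrix_diff_ldistrib')
    have "(AK + D ** LK) *v a = al *\<^sub>R a - be *\<^sub>R b" "(AK + D ** LK) *v b = be *\<^sub>R a + al *\<^sub>R b"
      using ha hb Fa Fb unfolding MK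
      by (simp_all add: matrix_vector_mult_add_rdistrib matrix_vector_mul_assoc[symmetric])
    then have "al < 0" using HK h unfolding hurwitz_real_iff by blast
    then show False using al by simp
  qed
qed


theorem theorem2:
  fixes A :: "real^'n^'n" and B :: "real^'m^'n" and C :: "real^'n^'p"
    and D :: "real^'q^'n" and E :: "real^'m^'p" and \<gamma> :: real
    and K :: "real^'n^'m" and PK :: "real^'n^'n" and L0 :: "real^'n^'q"
    and P :: "nat \<Rightarrow> real^'n^'n" and L :: "nat \<Rightarrow> real^'n^'q"
  assumes gamma: "\<gamma> > 0"
    and Qpd: "pos_def (transpose C ** C)"
    and EC: "transpose E ** C = 0"
    and Rpd: "pos_def (transpose E ** E)"
    and K: "K \<in> Kset A B C D E \<gamma>"
    and PK_sym: "transpose PK = PK"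
    and PK_pd: "pos_def PK"
    and PK_ARE: "transpose (A - B ** K) ** PK + PK ** (A - B ** K)
                 + (transpose C ** C + transpose K ** (transpose E ** E) ** K)
                 + (inverse (\<gamma>^2)) *\<^sub>R (PK ** D ** transpose D ** PK) = 0"
    and PK_stab: "hurwitz (A - B ** K + (inverse (\<gamma>^2)) *\<^sub>R (D ** transpose D ** PK))"
    and L0_stab: "hurwitz (A - B ** K + D ** L0)"
    and L_0: "L 0 = L0"
    and P_eq: "\<And>j. transpose (A - B ** K + D ** L j) ** P j + P j ** (A - B ** K + D ** L j)
                 + (transpose C ** C + transpose K ** (transpose E ** E) ** K)
                 - (\<gamma>^2) *\<^sub>R (transpose (L j) ** L j) = 0"
    and L_Suc: "\<And>j. L (Suc j) = (inverse (\<gamma>^2)) *\<^sub>R (transpose D ** P j)"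
  shows "\<exists>\<beta>::real. 0 \<le> \<beta> \<and> \<beta> < 1 \<and>
           (\<forall>j\<ge>1. trace (PK - P (Suc j)) \<le> \<beta> * trace (PK - P j))"
proof -
  define g where "g = \<gamma>^2"
  have g: "g > 0" using gamma by (simp add: g_def)
  have gi: "inverse (\<gamma>^2) = inverse g" by (simp add: g_def)
  define AK where "AK = A - B ** K"
  define Q where "Q = transpose C ** C + transpose K ** (transpose E ** E) ** K"
  define LK where "LK = inverse g *\<^sub>R (transpose D ** PK)"
  have PKs: "symm PK" using PK_sym by (simp add: symm_def)
  have U: "transpose D ** PK = g *\<^sub>R LK" using g by (simp add: LK_def)
  have PDDP: "PK ** D ** transpose D ** PK = (g * g) *\<^sub>R (transpose LK ** LK)"
  proof -
    have "PK ** D ** transpose D ** PK = transpose (transpose D ** PK) ** (transpose D ** PK)"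
      using PK_sym by (simp add: matrix_transpose_mul matrix_mul_assoc)
    also have "\<dots> = (g * g) *\<^sub>R (transpose LK ** LK)"
      unfolding U by (simp add: transpose_scalar matrix_scalar_ac scalar_matrix_assoc[symmetric])
    finally show ?thesis .
  qed
  have ARE: "transpose AK ** PK + PK ** AK + Q + g *\<^sub>R (transpose LK ** LK) = 0"
  proof -
    have e: "inverse g * (g * g) = g" using g by (simp add: field_simps)
    show ?thesis using PK_ARE unfolding gi PDDP scaleR_scaleR e by (simp add: AK_def Q_def)
  qed
  have MK: "A - B ** K + inverse (\<gamma>^2) *\<^sub>R (D ** transpose D ** PK) = AK + D ** LK"
    by (simp add: AK_def LK_def gi matrix_scalar_ac scalar_matrix_assoc[symmetric] matrix_mul_assoc)
  have HK: "hurwitz (AK + D ** LK)" using PK_stab unfolding MK .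
  define X where "X j = PK - P j" for j
  have Peq: "transpose (AK + D ** L j) ** P j + P j ** (AK + D ** L j) + Q - g *\<^sub>R (transpose (L j) ** L j) = 0" for j
    using P_eq[of j] by (simp add: AK_def Q_def g_def)
  have XeqL: "lyap (AK + D ** L j) (X j) = - (g *\<^sub>R (transpose (L j - LK) ** (L j - LK)))" for j
    unfolding X_def by (rule riccati_X[OF PKs U ARE Peq])
  have Wsym: "symm (g *\<^sub>R (transpose Z ** Z))" for Z :: "real^'n^'q"
    by (intro symm_scale symm_gram)
  have Wpsd: "psd (g *\<^sub>R (transpose Z ** Z))" for Z :: "real^'n^'q"
    using g by (intro psd_scale psd_gram) auto
  have symmneg: "symm (- W) \<longleftrightarrow> symm W" for W :: "real^'n^'n"
    by (auto simp: symm_def transpose_neg)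
  have XsP: "symm (X j) \<and> psd (X j)" if "hurwitz (AK + D ** L j)" for j
    using lyap_symm[OF that _ XeqL[of j]] lyap_psd[OF that Wsym Wpsd XeqL[of j]] Wsym symmneg by blast
  have DX: "transpose D ** X j = - (g *\<^sub>R (L (Suc j) - LK))" for j
    using g by (simp add: X_def L_Suc LK_def matrix_diff_ldistrib' gi scaleR_diff_right)
  have step: "lyap (AK + D ** L (Suc j)) (X j) = - (g *\<^sub>R (transpose (L j - L (Suc j)) ** (L j - L (Suc j))
      + transpose (L (Suc j) - LK) ** (L (Suc j) - LK)))" if "hurwitz (AK + D ** L j)" for j
    using riccati_step[OF conjunct1[OF XsP[OF that]] DX XeqL] .
  have HJ: "hurwitz (AK + D ** L j)" for j
  proof (induction j)
    case 0
    then show ?case using L0_stab by (simp add: L_0 AK_def)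
  next
    case (Suc j)
    show ?case using hurwitz_step[OF HK g conjunct1[OF XsP[OF Suc.IH]] conjunct2[OF XsP[OF Suc.IH]] step[OF Suc.IH]] .
  qed
  have Xs: "symm (X j)" and Xp: "psd (X j)" for j using XsP[OF HJ] by auto
  have Dpsd: "psd (X j - X (Suc j))" for j
  proof -
    have "lyap (AK + D ** L (Suc j)) (X j - X (Suc j)) = - (g *\<^sub>R (transpose (L j - L (Suc j)) ** (L j - L (Suc j))))"
      unfolding lyap_diff step[OF HJ] XeqL by (simp add: algebra_simps)
    then show ?thesis using lyap_psd[OF HJ Wsym Wpsd] by blast
  qed
  have Dsym: "symm (X j - X (Suc j))" for j using Xs by (simp add: symm_diff)
  have trdec: "trace (X (Suc j)) \<le> trace (X j)" for j
    using trace_mono_psd[OF Dpsd] .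
  define T0 where "T0 = trace (X 0)"
  have trT0: "trace (X j) \<le> T0" for j
  proof (induction j)
    case 0 then show ?case by (simp add: T0_def)
  next
    case (Suc j) then show ?case using trdec[of j] by simp
  qed
  have T0: "T0 \<ge> 0" unfolding T0_def by (rule trace_psd_nonneg[OF Xp])
  obtain c where c: "c > 0" "\<And>Y. c * norm Y \<le> norm (lyap (AK + D ** LK) Y)"
    using linear_inj_bounded_below_pos[OF lyap_linear lyap_inj_op[OF HK]] by blast
  define nD where "nD = norm (transpose D)"
  define kap where "kap = real CARD('n) * nD^2 * T0 / (g * c)"
  have kap: "kap \<ge> 0" unfolding kap_def using T0 g c by simp
  have main: "trace (X (Suc j)) \<le> kap * (trace (X j) - trace (X (Suc j)))" for j
  proof -
    define X' where "X' = X (Suc j)"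
    define Dl where "Dl = X j - X (Suc j)"
    define F where "F = L (Suc j) - LK"
    define F' where "F' = L (Suc (Suc j)) - LK"
    define MK where "MK = AK + D ** LK"
    have eK: "lyap MK X' = - (g *\<^sub>R (transpose (F - F') ** (F - F'))) + g *\<^sub>R (transpose F' ** F')"
      using riccati_K[OF Xs[of "Suc j"] DX[of "Suc j"] XeqL[of "Suc j"]] unfolding F_def F'_def MK_def X'_def .
    obtain Z1 where Z1: "lyap MK Z1 = - (g *\<^sub>R (transpose (F - F') ** (F - F')))"
      using lyap_surj[OF HK] unfolding MK_def by blast
    have "lyap MK (Z1 - X') = - (g *\<^sub>R (transpose F' ** F'))"
      by (simp add: lyap_diff Z1 eK)
    then have "psd (Z1 - X')" using lyap_psd[OF HK Wsym Wpsd] unfolding MK_def by blast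
    then have t1: "trace X' \<le> trace Z1" by (rule trace_mono_psd)
    have t2: "trace Z1 \<le> real CARD('n) * norm Z1" by (rule trace_le_norm)
    define nF where "nF = norm (F - F')"
    have "c * norm Z1 \<le> norm (lyap MK Z1)" unfolding MK_def by (rule c(2))
    also have "\<dots> = g * norm (transpose (F - F') ** (F - F'))" using g by (simp add: Z1)
    also have "\<dots> \<le> g * nF^2"
      using norm_mult_le[of "transpose (F - F')" "F - F'"] g
      by (simp add: nF_def norm_transpose power2_eq_square)
    finally have B: "c * norm Z1 \<le> g * nF^2" .
    have gF: "g *\<^sub>R (F - F') = - (transpose D ** Dl)"
      using DX[of j] DX[of "Suc j"] by (simp add: Dl_def F_def F'_def matrix_diff_ldistrib' algebra_simps)
    have b: "g * nF \<le> nD * norm Dl"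
    proof -
      have "g * nF = norm (transpose D ** Dl)" using gF g by (metis nF_def norm_minus_cancel norm_scaleR abs_of_pos)
      also have "\<dots> \<le> nD * norm Dl" unfolding nD_def by (rule norm_mult_le)
      finally show ?thesis .
    qed
    have nDl: "norm Dl \<le> trace Dl" unfolding Dl_def by (rule norm_le_trace[OF Dpsd Dsym])
    have trDl: "trace Dl = trace (X j) - trace X'" by (simp add: Dl_def X'_def trace_sub)
    have trX': "0 \<le> trace X'" unfolding X'_def by (rule trace_psd_nonneg[OF Xp])
    have trDlT: "trace Dl \<le> T0" using trDl trX' trT0[of j] by simp
    have "(g * nF)^2 \<le> (nD * norm Dl)^2"
      using b g by (intro power_mono) (auto simp: nF_def)
    also have "\<dots> = nD^2 * (norm Dl * norm Dl)" by (simp add: power2_eq_square)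
    also have "\<dots> \<le> nD^2 * (T0 * trace Dl)"
      using nDl trDlT T0 by (intro mult_left_mono mult_mono) auto
    finally have A: "g * (g * nF^2) \<le> nD^2 * (T0 * trace Dl)" by (simp add: power2_eq_square mult_ac)
    have "g * (c * norm Z1) \<le> g * (g * nF^2)" using B g by simp
    with A have "(g * c) * norm Z1 \<le> nD^2 * (T0 * trace Dl)" by (simp add: mult_ac)
    then have "norm Z1 \<le> nD^2 * (T0 * trace Dl) / (g * c)" using g c by (simp add: pos_le_divide_eq mult.commute)
    then have "real CARD('n) * norm Z1 \<le> real CARD('n) * (nD^2 * (T0 * trace Dl) / (g * c))"
      by (rule mult_left_mono) simp
    also have "\<dots> = kap * trace Dl" by (simp add: kap_def)
    finally show ?thesis using t1 t2 trDl unfolding X'_def by simp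
  qed
  define \<beta> where "\<beta> = kap / (1 + kap)"
  show ?thesis
  proof (intro exI[of _ \<beta>] conjI allI impI)
    show "0 \<le> \<beta>" using kap by (simp add: \<beta>_def)
    show "\<beta> < 1" using kap by (simp add: \<beta>_def)
    fix j :: nat assume "1 \<le> j"
    have "(1 + kap) * trace (X (Suc j)) \<le> kap * trace (X j)" using main[of j] by (simp add: algebra_simps)
    then have "trace (X (Suc j)) \<le> \<beta> * trace (X j)" using kap by (simp add: \<beta>_def field_simps)
    then show "trace (PK - P (Suc j)) \<le> \<beta> * trace (PK - P j)" by (simp add: X_def)
  qed
qed


end
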